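(* Let $M$ be a centrally endo-AIP right $R$-module with $S=\mathrm{End}_R(M)$. If $\mathrm{u.dim}(S_S)=1$, then $S$ is a prime ring.
   Context: For $N\le M$, $l_S(N)=\{\phi\in S:\phi(N)=0\}$. An ideal $I$ of $S$ is centrally s-unital if for every $a\in I$ there is $z\in I$ central in $S$ with $az=a$. $M$ is centrally endo-AIP if $l_S(N)$ is a centrally s-unital ideal of $S$ for every fully invariant submodule $N$ of $M$. $\mathrm{u.dim}(S_S)=1$ means $S_S$ has uniform dimension $1$ (i.e. $S_S$ is uniform). *)

theory Defs
  imports Main
begin

definition right_module :: "('m::ab_group_add \<Rightarrow> 'r::ring_1 \<Rightarrow> 'm) \<Rightarrow> bool" where
  "right_module act \<longleftrightarrow>
     (\<forall>x y r. act (x + y) r = act x r + act y r) \<and>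
     (\<forall>x r s. act x (r + s) = act x r + act x s) \<and>
     (\<forall>x r s. act x (r * s) = act (act x r) s) \<and>
     (\<forall>x. act x 1 = x)"

text \<open>S = End_R(M): additive R-linear maps; ring with pointwise addition and
  composition as multiplication ((f g)(m) = f (g m)), acting on the left of M.\<close>
definition End_R :: "('m::ab_group_add \<Rightarrow> 'r::ring_1 \<Rightarrow> 'm) \<Rightarrow> ('m \<Rightarrow> 'm) set" where
  "End_R act = {f. (\<forall>x y. f (x + y) = f x + f y) \<and> (\<forall>x r. f (act x r) = act (f x) r)}"

definition zero_end :: "'m::ab_group_add \<Rightarrow> 'm" where
  "zero_end = (\<lambda>x. 0)"

definition add_end :: "('m::ab_group_add \<Rightarrow> 'm) \<Rightarrow> ('m \<Rightarrow> 'm) \<Rightarrow> 'm \<Rightarrow> 'm" where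
  "add_end f g = (\<lambda>x. f x + g x)"

definition neg_end :: "('m::ab_group_add \<Rightarrow> 'm) \<Rightarrow> 'm \<Rightarrow> 'm" where
  "neg_end f = (\<lambda>x. - f x)"

definition submodule :: "('m::ab_group_add \<Rightarrow> 'r::ring_1 \<Rightarrow> 'm) \<Rightarrow> 'm set \<Rightarrow> bool" where
  "submodule act N \<longleftrightarrow> 0 \<in> N \<and> (\<forall>x\<in>N. \<forall>y\<in>N. x + y \<in> N) \<and> (\<forall>x\<in>N. - x \<in> N)
      \<and> (\<forall>x\<in>N. \<forall>r. act x r \<in> N)"

definition fully_invariant :: "('m::ab_group_add \<Rightarrow> 'r::ring_1 \<Rightarrow> 'm) \<Rightarrow> 'm set \<Rightarrow> bool" where
  "fully_invariant act N \<longleftrightarrow> submodule act N \<and> (\<forall>\<phi>\<in>End_R act. \<phi> ` N \<subseteq> N)"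

definition l_S :: "('m::ab_group_add \<Rightarrow> 'r::ring_1 \<Rightarrow> 'm) \<Rightarrow> 'm set \<Rightarrow> ('m \<Rightarrow> 'm) set" where
  "l_S act N = {\<phi> \<in> End_R act. \<forall>n\<in>N. \<phi> n = 0}"

definition add_subgroup_end :: "('m::ab_group_add \<Rightarrow> 'm) set \<Rightarrow> ('m \<Rightarrow> 'm) set \<Rightarrow> bool" where
  "add_subgroup_end S I \<longleftrightarrow> I \<subseteq> S \<and> zero_end \<in> I \<and> (\<forall>a\<in>I. \<forall>b\<in>I. add_end a b \<in> I)
      \<and> (\<forall>a\<in>I. neg_end a \<in> I)"

definition right_ideal_end :: "('m::ab_group_add \<Rightarrow> 'm) set \<Rightarrow> ('m \<Rightarrow> 'm) set \<Rightarrow> bool" where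
  "right_ideal_end S I \<longleftrightarrow> add_subgroup_end S I \<and> (\<forall>a\<in>I. \<forall>s\<in>S. a \<circ> s \<in> I)"

definition ideal_end :: "('m::ab_group_add \<Rightarrow> 'm) set \<Rightarrow> ('m \<Rightarrow> 'm) set \<Rightarrow> bool" where
  "ideal_end S I \<longleftrightarrow> right_ideal_end S I \<and> (\<forall>a\<in>I. \<forall>s\<in>S. s \<circ> a \<in> I)"

definition central_in :: "('m \<Rightarrow> 'm) set \<Rightarrow> ('m \<Rightarrow> 'm) \<Rightarrow> bool" where
  "central_in S z \<longleftrightarrow> z \<in> S \<and> (\<forall>s\<in>S. z \<circ> s = s \<circ> z)"

definition centrally_s_unital :: "('m::ab_group_add \<Rightarrow> 'm) set \<Rightarrow> ('m \<Rightarrow> 'm) set \<Rightarrow> bool" where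
  "centrally_s_unital S I \<longleftrightarrow> ideal_end S I \<and>
     (\<forall>a\<in>I. \<exists>z\<in>I. central_in S z \<and> a \<circ> z = a)"

definition centrally_endo_AIP :: "('m::ab_group_add \<Rightarrow> 'r::ring_1 \<Rightarrow> 'm) \<Rightarrow> bool" where
  "centrally_endo_AIP act \<longleftrightarrow>
     (\<forall>N. fully_invariant act N \<longrightarrow> centrally_s_unital (End_R act) (l_S act N))"

definition udim_one_right :: "('m::ab_group_add \<Rightarrow> 'm) set \<Rightarrow> bool" where
  "udim_one_right S \<longleftrightarrow> S \<noteq> {zero_end} \<and>
     (\<forall>I J. right_ideal_end S I \<longrightarrow> right_ideal_end S J \<longrightarrow> I \<noteq> {zero_end} \<longrightarrow> J \<noteq> {zero_end}
        \<longrightarrow> I \<inter> J \<noteq> {zero_end})"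

definition prime_ring_end :: "('m::ab_group_add \<Rightarrow> 'm) set \<Rightarrow> bool" where
  "prime_ring_end S \<longleftrightarrow> S \<noteq> {zero_end} \<and>
     (\<forall>a\<in>S. \<forall>b\<in>S. (\<forall>s\<in>S. a \<circ> s \<circ> b = zero_end) \<longrightarrow> a = zero_end \<or> b = zero_end)"

end

theory Submission
  imports Defs
begin

lemma end_zero: "f \<in> End_R act \<Longrightarrow> f 0 = 0"
  unfolding End_R_def by (metis (mono_tags, lifting) add_cancel_right_right mem_Collect_eq)

lemma end_add: "f \<in> End_R act \<Longrightarrow> f (x + y) = f x + f y"
  unfolding End_R_def by auto

lemma end_act: "f \<in> End_R act \<Longrightarrow> f (act x r) = act (f x) r"
  unfolding End_R_def by auto

lemma end_neg: "f \<in> End_R act \<Longrightarrow> f (- x) = - f x"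
  by (metis add.right_inverse end_add end_zero neg_eq_iff_add_eq_0)

lemma end_comp: "f \<in> End_R act \<Longrightarrow> g \<in> End_R act \<Longrightarrow> f \<circ> g \<in> End_R act"
  unfolding End_R_def by auto

lemma end_id: "id \<in> End_R act"
  unfolding End_R_def by auto


lemma add_end_in: "right_module act \<Longrightarrow> f \<in> End_R act \<Longrightarrow> g \<in> End_R act \<Longrightarrow> add_end f g \<in> End_R act"
  unfolding End_R_def add_end_def right_module_def by (simp add: algebra_simps)

lemma act_neg: "right_module act \<Longrightarrow> act (- x) r = - act x r"
  unfolding right_module_def
  by (metis add.right_inverse add_cancel_right_right neg_eq_iff_add_eq_0)

lemma neg_end_in: "right_module act \<Longrightarrow> f \<in> End_R act \<Longrightarrow> neg_end f \<in> End_R act"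
  unfolding End_R_def neg_end_def by (simp add: act_neg)

theorem corollary3p8:
  fixes act :: "'m::ab_group_add \<Rightarrow> 'r::ring_1 \<Rightarrow> 'm"
  assumes "right_module act"
    and "centrally_endo_AIP act"
    and "udim_one_right (End_R act)"
  shows "prime_ring_end (End_R act)"
proof -
  let ?S = "End_R act"
  have act0: "act 0 r = 0" for r
    using assms(1) unfolding right_module_def
    by (metis add_cancel_right_right add_0)
  have zS: "zero_end \<in> ?S"
    unfolding End_R_def zero_end_def using act0 by auto
  have nz: "?S \<noteq> {zero_end}" using assms(3) unfolding udim_one_right_def by auto
  have main: "a = zero_end \<or> b = zero_end"
    if aS: "a \<in> ?S" and bS: "b \<in> ?S" and ab: "\<forall>s\<in>?S. a \<circ> s \<circ> b = zero_end" for a b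
  proof (rule ccontr)
    assume H: "\<not> (a = zero_end \<or> b = zero_end)"
    define N where "N = {m. \<forall>s\<in>?S. a (s m) = 0}"
    have fi: "fully_invariant act N"
      unfolding fully_invariant_def submodule_def N_def
    proof (intro conjI ballI allI)
      show "0 \<in> {m. \<forall>s\<in>?S. a (s m) = 0}" using aS by (auto simp: end_zero)
    next
      fix x y assume "x \<in> {m. \<forall>s\<in>?S. a (s m) = 0}" "y \<in> {m. \<forall>s\<in>?S. a (s m) = 0}"
      then show "x + y \<in> {m. \<forall>s\<in>?S. a (s m) = 0}" using aS by (auto simp: end_add)
    next
      fix x assume "x \<in> {m. \<forall>s\<in>?S. a (s m) = 0}"
      then show "- x \<in> {m. \<forall>s\<in>?S. a (s m) = 0}" using aS by (auto simp: end_neg)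
    next
      fix x r assume "x \<in> {m. \<forall>s\<in>?S. a (s m) = 0}"
      then show "act x r \<in> {m. \<forall>s\<in>?S. a (s m) = 0}" using aS by (auto simp: end_act act0)
    next
      fix \<phi> assume p: "\<phi> \<in> ?S"
      show "\<phi> ` {m. \<forall>s\<in>?S. a (s m) = 0} \<subseteq> {m. \<forall>s\<in>?S. a (s m) = 0}"
      proof
        fix y assume "y \<in> \<phi> ` {m. \<forall>s\<in>?S. a (s m) = 0}"
        then obtain x where x: "\<forall>s\<in>?S. a (s x) = 0" "y = \<phi> x" by auto
        show "y \<in> {m. \<forall>s\<in>?S. a (s m) = 0}"
        proof (simp, intro ballI)
          fix s assume "s \<in> ?S"
          then have "s \<circ> \<phi> \<in> ?S" using end_comp p by blast
          then show "a (s y) = 0" using x by auto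
        qed
      qed
    qed
    have aL: "a \<in> l_S act N"
    proof -
      have "a n = 0" if "n \<in> N" for n
      proof -
        have "\<forall>s\<in>?S. a (s n) = 0" using that unfolding N_def by simp
        then have "a (id n) = 0" using end_id[of act] by blast
        then show ?thesis by simp
      qed
      then show ?thesis using aS unfolding l_S_def by blast
    qed
    have bN: "b m \<in> N" for m
    proof -
      have "a (s (b m)) = 0" if "s \<in> ?S" for s
      proof -
        have "(a \<circ> s \<circ> b) m = zero_end m" using ab that by simp
        then show ?thesis by (simp add: zero_end_def)
      qed
      then show ?thesis unfolding N_def by blast
    qed
    from assms(2) fi have "centrally_s_unital ?S (l_S act N)"
      unfolding centrally_endo_AIP_def by blast
    then obtain z where zL: "z \<in> l_S act N" and zc: "central_in ?S z" and az: "a \<circ> z = a"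
      using aL unfolding centrally_s_unital_def by blast
    have zS': "z \<in> ?S" using zc unfolding central_in_def by auto
    have zb: "z \<circ> b = zero_end" using zL bN unfolding l_S_def zero_end_def by auto
    have za: "z \<circ> a = a" using zc aS az unfolding central_in_def by auto
    define I where "I = {s \<in> ?S. z \<circ> s = s}"
    define J where "J = {s \<in> ?S. z \<circ> s = zero_end}"
    have z0: "z 0 = 0" using end_zero zS' by blast
    have rI: "right_ideal_end ?S I"
      unfolding right_ideal_end_def add_subgroup_end_def I_def
    proof (intro conjI ballI)
      show "zero_end \<in> {s \<in> ?S. z \<circ> s = s}" using zS z0 by (auto simp: zero_end_def)
    next
      fix x y assume "x \<in> {s \<in> ?S. z \<circ> s = s}" "y \<in> {s \<in> ?S. z \<circ> s = s}"
      then show "add_end x y \<in> {s \<in> ?S. z \<circ> s = s}"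
      proof -
        have "z \<circ> add_end x y = add_end x y"
        proof
          fix m have "z (x m) = x m" "z (y m) = y m" using \<open>x \<in> _\<close> \<open>y \<in> _\<close> by (auto dest: fun_cong)
          then show "(z \<circ> add_end x y) m = add_end x y m" using end_add[OF zS'] by (simp add: add_end_def)
        qed
        then show ?thesis using add_end_in[OF assms(1)] \<open>x \<in> _\<close> \<open>y \<in> _\<close> by auto
      qed
    next
      fix x assume "x \<in> {s \<in> ?S. z \<circ> s = s}"
      then show "neg_end x \<in> {s \<in> ?S. z \<circ> s = s}"
      proof -
        have "z \<circ> neg_end x = neg_end x"
        proof
          fix m have "z (x m) = x m" using \<open>x \<in> _\<close> by (auto dest: fun_cong)
          then show "(z \<circ> neg_end x) m = neg_end x m" using end_neg[OF zS'] by (simp add: neg_end_def)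
        qed
        then show ?thesis using neg_end_in[OF assms(1)] \<open>x \<in> _\<close> by auto
      qed
    next
      fix x s assume "x \<in> {s \<in> ?S. z \<circ> s = s}" "s \<in> ?S"
      then show "x \<circ> s \<in> {s \<in> ?S. z \<circ> s = s}" using end_comp
      proof -
        have "z \<circ> (x \<circ> s) = (z \<circ> x) \<circ> s" by (simp add: comp_assoc)
        then show ?thesis using \<open>x \<in> _\<close> \<open>s \<in> _\<close> end_comp by auto
      qed
    qed (auto)
    have rJ: "right_ideal_end ?S J"
      unfolding right_ideal_end_def add_subgroup_end_def J_def
    proof (intro conjI ballI)
      show "zero_end \<in> {s \<in> ?S. z \<circ> s = zero_end}" using zS z0 by (auto simp: zero_end_def)
    next
      fix x y assume "x \<in> {s \<in> ?S. z \<circ> s = zero_end}" "y \<in> {s \<in> ?S. z \<circ> s = zero_end}"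
      then show "add_end x y \<in> {s \<in> ?S. z \<circ> s = zero_end}"
      proof -
        have "z \<circ> add_end x y = zero_end"
        proof
          fix m have "z (x m) = 0" "z (y m) = 0" using \<open>x \<in> _\<close> \<open>y \<in> _\<close> by (auto simp: zero_end_def dest: fun_cong)
          then show "(z \<circ> add_end x y) m = zero_end m" using end_add[OF zS'] by (simp add: add_end_def zero_end_def)
        qed
        then show ?thesis using add_end_in[OF assms(1)] \<open>x \<in> _\<close> \<open>y \<in> _\<close> by auto
      qed
    next
      fix x assume "x \<in> {s \<in> ?S. z \<circ> s = zero_end}"
      then show "neg_end x \<in> {s \<in> ?S. z \<circ> s = zero_end}"
      proof -
        have "z \<circ> neg_end x = zero_end"
        proof
          fix m have "z (x m) = 0" using \<open>x \<in> _\<close> by (auto simp: zero_end_def dest: fun_cong)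
          then show "(z \<circ> neg_end x) m = zero_end m" using end_neg[OF zS'] by (simp add: neg_end_def zero_end_def)
        qed
        then show ?thesis using neg_end_in[OF assms(1)] \<open>x \<in> _\<close> by auto
      qed
    next
      fix x s assume "x \<in> {s \<in> ?S. z \<circ> s = zero_end}" "s \<in> ?S"
      then show "x \<circ> s \<in> {s \<in> ?S. z \<circ> s = zero_end}" using end_comp
      proof -
        have "z \<circ> (x \<circ> s) = (z \<circ> x) \<circ> s" by (simp add: comp_assoc)
        also have "\<dots> = zero_end" using \<open>x \<in> _\<close> by (simp add: zero_end_def comp_def)
        finally show ?thesis using \<open>x \<in> _\<close> \<open>s \<in> _\<close> end_comp by auto
      qed
    qed (auto)
    have "a \<in> I" using aS za unfolding I_def by auto
    then have In: "I \<noteq> {zero_end}" using H by auto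
    have "b \<in> J" using bS zb unfolding J_def by auto
    then have Jn: "J \<noteq> {zero_end}" using H by auto
    have "I \<inter> J = {zero_end}"
    proof
      show "I \<inter> J \<subseteq> {zero_end}" unfolding I_def J_def by auto
      show "{zero_end} \<subseteq> I \<inter> J" using zS z0 unfolding I_def J_def by (auto simp: zero_end_def comp_def)
    qed
    then show False using assms(3) rI rJ In Jn unfolding udim_one_right_def by blast
  qed
  show ?thesis unfolding prime_ring_end_def using nz main by blast
qed

end
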